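(* Let $m\ge 2$ and let $\mathcal{A}\subseteq\mathcal{P}([m])$ be a finite union-closed, separating collection of sets with universe $U(\mathcal{A})=[m]=\{1,\dots,m\}$, where the elements are labelled so that $|1|_{\mathcal{A}}\le |2|_{\mathcal{A}}\le\dots\le |m|_{\mathcal{A}}$. For $i\in[m-1]$ let $A_i:=\bigcup_{A\in\mathcal{A},\, i\notin A} A$, let $A_0:=U(\mathcal{A})$, and let $\mathcal{S}$ be the collection $\{A_0,A_1,\dots,A_{m-1}\}$. Then for every $i\in\{1,\dots,m-1\}$ with $|i|_{\mathcal{S}}<m-1$, there exists an element $k\in\{1,\dots,m-1\}$ with $|k|_{\mathcal{S}}=m-1$ that dominates $i$ in $\mathcal{A}$.
   Context: A collection $\mathcal{A}$ of sets is union-closed if $S,T\in\mathcal{A}$ implies $S\cup T\in\mathcal{A}$. The universe $U(\mathcal{A})$ is $\bigcup_{A\in\mathcal{A}}A$. $\mathcal{A}$ is separating if for any two distinct elements of $U(\mathcal{A})$ there is a set in $\mathcal{A}$ containing one of them but not the other. For an element $a$ and a collection $\mathcal{B}$, $|a|_{\mathcal{B}}$ denotes the number of sets in $\mathcal{B}$ containing $a$. An element $b$ dominates an element $c$ in $\mathcal{A}$ if every set of $\mathcal{A}$ that contains $c$ also contains $b$. (Under the hypotheses, for each $i\in[m-1]$ there is a set of $\mathcal{A}$ not containing $i$, and $A_i$ contains every $j>i$ but not $i$, so the sets $A_0,\dots,A_{m-1}$ are distinct.) *)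

theory Defs
  imports Main
begin

definition union_closed :: "'a set set \<Rightarrow> bool" where
  "union_closed \<A> \<longleftrightarrow> (\<forall>S\<in>\<A>. \<forall>T\<in>\<A>. S \<union> T \<in> \<A>)"

definition universe :: "'a set set \<Rightarrow> 'a set" where
  "universe \<A> = \<Union>\<A>"

definition separating :: "'a set set \<Rightarrow> bool" where
  "separating \<A> \<longleftrightarrow> (\<forall>x\<in>universe \<A>. \<forall>y\<in>universe \<A>. x \<noteq> y \<longrightarrow>
      (\<exists>A\<in>\<A>. (x \<in> A \<and> y \<notin> A) \<or> (y \<in> A \<and> x \<notin> A)))"

definition occ :: "'a \<Rightarrow> 'a set set \<Rightarrow> nat" where
  "occ a \<B> = card {B \<in> \<B>. a \<in> B}"

definition dominates :: "'a set set \<Rightarrow> 'a \<Rightarrow> 'a \<Rightarrow> bool" where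
  "dominates \<A> b c \<longleftrightarrow> (\<forall>A\<in>\<A>. c \<in> A \<longrightarrow> b \<in> A)"

definition Aset :: "'a set set \<Rightarrow> 'a \<Rightarrow> 'a set" where
  "Aset \<A> i = \<Union>{A \<in> \<A>. i \<notin> A}"

end

theory Submission
  imports Defs
begin

theorem lemma1:
  fixes m :: nat and \<A> :: "nat set set"
  assumes "m \<ge> 2"
    and "finite \<A>"
    and "\<A> \<subseteq> Pow {1..m}"
    and "union_closed \<A>"
    and "separating \<A>"
    and "universe \<A> = {1..m}"
    and "\<And>i j. i \<in> {1..m} \<Longrightarrow> j \<in> {1..m} \<Longrightarrow> i \<le> j \<Longrightarrow> occ i \<A> \<le> occ j \<A>"
    and "\<S> = insert (universe \<A>) ((\<lambda>i. Aset \<A> i) ` {1..m-1})"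
  shows "\<forall>i \<in> {1..m-1}. occ i \<S> < m - 1 \<longrightarrow>
           (\<exists>k \<in> {1..m-1}. occ k \<S> = m - 1 \<and> dominates \<A> k i)"
proof -
  have domA: "dominates \<A> j i \<longleftrightarrow> i \<notin> Aset \<A> j" for i j
    unfolding dominates_def Aset_def by blast
  have notin: "i \<notin> Aset \<A> i" for i unfolding Aset_def by blast
  have sub: "Aset \<A> i \<subseteq> {1..m}" for i using assms(3) unfolding Aset_def by blast
  have key: "j \<in> Aset \<A> i" if ij: "i \<in> {1..m}" "j \<in> {1..m}" "i < j" for i j
  proof (rule ccontr)
    assume "j \<notin> Aset \<A> i"
    hence d: "{B \<in> \<A>. j \<in> B} \<subseteq> {B \<in> \<A>. i \<in> B}" using domA unfolding dominates_def by blast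
    have "occ i \<A> \<le> occ j \<A>" using assms(7) ij by simp
    hence "{B \<in> \<A>. j \<in> B} = {B \<in> \<A>. i \<in> B}"
      using card_subset_eq[OF _ d] assms(2) d card_mono unfolding occ_def
      by (metis (no_types, lifting) finite_subset le_antisym mem_Collect_eq subsetI)
    moreover have "\<exists>A\<in>\<A>. (i \<in> A \<and> j \<notin> A) \<or> (j \<in> A \<and> i \<notin> A)"
      using assms(5,6) ij unfolding separating_def by auto
    ultimately show False by blast
  qed
  have trans: "dominates \<A> a c" if "dominates \<A> a b" "dominates \<A> b c" for a b c
    using that unfolding dominates_def by blast
  have inj: "inj_on (Aset \<A>) {1..m-1}"
  proof (rule inj_onI)
    fix x y assume xy: "x \<in> {1..m-1}" "y \<in> {1..m-1}" "Aset \<A> x = Aset \<A> y"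
    show "x = y"
    proof (rule ccontr)
      assume "x \<noteq> y"
      hence "x < y \<or> y < x" by auto
      moreover have "x \<le> m" "y \<le> m" "1 \<le> x" "1 \<le> y" using xy by auto
      ultimately show False using key[of x y] key[of y x] xy(3) notin by fastforce
    qed
  qed
  have notimg: "{1..m} \<notin> Aset \<A> ` {1..m-1}"
  proof
    assume "{1..m} \<in> Aset \<A> ` {1..m-1}"
    then obtain x where x: "x \<in> {1..m-1}" "{1..m} = Aset \<A> x" by blast
    hence "x \<in> {1..m}" by auto
    thus False using x notin by metis
  qed
  have cardS: "card \<S> = m"
    using assms(8,6,1) inj notimg by (simp add: card_image)
  have finS: "finite \<S>" using assms(8) by simp
  show ?thesis
  proof (intro ballI impI)
    fix i assume i: "i \<in> {1..m-1}"
    define D where "D = {k \<in> {1..m-1}. dominates \<A> k i}"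
    have iD: "i \<in> D" using i unfolding D_def dominates_def by auto
    have finD: "finite D" unfolding D_def by simp
    define k where "k = Max D"
    have kD: "k \<in> D" using finD iD k_def Max_in by blast
    have kmax: "x \<le> k" if "x \<in> D" for x using finD that k_def by simp
    have k1: "k \<in> {1..m-1}" and kdom: "dominates \<A> k i" using kD D_def by auto
    have allin: "k \<in> Aset \<A> j" if j: "j \<in> {1..m-1}" "j \<noteq> k" for j
    proof (cases "j < k")
      case True thus ?thesis using key[of j k] j k1 by auto
    next
      case False
      show ?thesis
      proof (rule ccontr)
        assume "k \<notin> Aset \<A> j"
        hence "dominates \<A> j k" using domA by blast
        hence "j \<in> D" using trans kdom j unfolding D_def by blast
        thus False using kmax False j by fastforce
      qed
    qed
    have "{B \<in> \<S>. k \<in> B} = \<S> - {Aset \<A> k}"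
    proof
      show "{B \<in> \<S>. k \<in> B} \<subseteq> \<S> - {Aset \<A> k}" using notin by auto
      show "\<S> - {Aset \<A> k} \<subseteq> {B \<in> \<S>. k \<in> B}"
      proof
        fix B assume B: "B \<in> \<S> - {Aset \<A> k}"
        show "B \<in> {B \<in> \<S>. k \<in> B}"
        proof (cases "B = universe \<A>")
          case True thus ?thesis using B k1 assms(6) by auto
        next
          case False
          then obtain j where j: "j \<in> {1..m-1}" "B = Aset \<A> j" using B False assms(8) by blast
          hence "j \<noteq> k" using B by blast
          thus ?thesis using allin j B by blast
        qed
      qed
    qed
    moreover have "Aset \<A> k \<in> \<S>" using assms(8) k1 by auto
    ultimately have "occ k \<S> = m - 1" unfolding occ_def using cardS finS by simp
    thus "\<exists>k \<in> {1..m-1}. occ k \<S> = m - 1 \<and> dominates \<A> k i" using k1 kdom by blast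
  qed
qed

end
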